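(* Let $q$ be a prime power, $s,\ell$ positive integers, $\alpha,\beta\in\mathbb{F}_q^*$, let $r$ be the multiplicative order of $\beta$, and assume $q\equiv 1\pmod{r\ell}$. Let $\omega\in\mathbb{F}_q$ be a primitive $r\ell$-th root of unity with $\omega^\ell=\beta$, and for $k=0,\dots,\ell-1$ let $\eta_k(y)=\prod_{j\ne k,\,0\le j\le \ell-1}\frac{y-\omega^{1+jr}}{\omega^{1+kr}-\omega^{1+jr}}$. Let $\mathcal{C}$ be an ideal of $\mathcal{R}=\mathbb{F}_q[x,y]/\langle x^s-\alpha,y^\ell-\beta\rangle$, let $I_j=\{f(x)\in\mathbb{F}_q[x]/\langle x^s-\alpha\rangle:\eta_j(y)f(x)\in\mathcal{C}\}$, let $p_j(x)$ be the unique monic divisor of $x^s-\alpha$ generating $I_j$, and let $a_j=\deg p_j(x)$, for $j=0,\dots,\ell-1$. Then the elements $$x^i p_j(x)\eta_j(y),\qquad 0\le j\le \ell-1,\ \ 0\le i\le s-a_j-1,$$ form a basis of $\mathcal{C}$ over $\mathbb{F}_q$, i.e. the matrix whose rows are (the coefficient vectors of) these elements, ordered by $j$ and then by $i$, is a generator matrix of $\mathcal{C}$.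
   Context: An element $\sum_{i,j}c_{i,j}x^iy^j$ of $\mathcal{R}$ (with $0\le i\le s-1$, $0\le j\le \ell-1$) is identified with the $s\times\ell$ array $(c_{i,j})$, i.e. a vector of length $s\ell$ over $\mathbb{F}_q$; ideals of $\mathcal{R}$ are two-dimensional $(\alpha,\beta)$-constacyclic codes. *)

theory Defs
  imports "HOL-Computational_Algebra.Polynomial" "HOL-Library.Cardinality"
begin

text \<open>Elements of R = F[x,y]/<x^s - alpha, y^l - beta> are represented by their
  reduced representatives: bivariate polynomials as polynomials in y whose
  coefficients are polynomials in x (type 'a poly poly), with y-degree < l
  and every x-degree < s.\<close>

definition mult_order :: "'a::field \<Rightarrow> nat" where
  "mult_order b = (LEAST n. 0 < n \<and> b ^ n = 1)"

definition primitive_root_of_unity :: "nat \<Rightarrow> 'a::field \<Rightarrow> bool" where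
  "primitive_root_of_unity n w \<longleftrightarrow> w ^ n = 1 \<and> (\<forall>k. 0 < k \<and> k < n \<longrightarrow> w ^ k \<noteq> 1)"

definition xmod :: "nat \<Rightarrow> 'a::field \<Rightarrow> 'a poly" where
  "xmod s a = monom 1 s - [:a:]"

definition Rset :: "nat \<Rightarrow> nat \<Rightarrow> 'a::field poly poly set" where
  "Rset s l = {f. degree f < l \<and> (\<forall>k. degree (coeff f k) < s)}"

definition red :: "nat \<Rightarrow> nat \<Rightarrow> 'a::field \<Rightarrow> 'a \<Rightarrow> 'a poly poly \<Rightarrow> 'a poly poly" where
  "red s l a b f = (\<Sum>k\<le>degree f.
      monom (smult (b ^ (k div l)) (coeff f k) mod xmod s a) (k mod l))"

definition is_R_ideal :: "nat \<Rightarrow> nat \<Rightarrow> 'a::field \<Rightarrow> 'a \<Rightarrow> 'a poly poly set \<Rightarrow> bool" where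
  "is_R_ideal s l a b C \<longleftrightarrow> C \<subseteq> Rset s l \<and> 0 \<in> C \<and>
     (\<forall>f\<in>C. \<forall>g\<in>C. f + g \<in> C) \<and>
     (\<forall>g\<in>Rset s l. \<forall>f\<in>C. red s l a b (g * f) \<in> C)"

definition ypoly :: "'a::zero poly \<Rightarrow> 'a poly poly" where
  "ypoly p = map_poly (\<lambda>c. [:c:]) p"

definition xpoly :: "'a::zero poly \<Rightarrow> 'a poly poly" where
  "xpoly f = [:f:]"

definition eta :: "'a::field \<Rightarrow> nat \<Rightarrow> nat \<Rightarrow> nat \<Rightarrow> 'a poly" where
  "eta w r l k = (\<Prod>j\<in>{0..<l} - {k}.
      smult (1 / (w ^ (1 + k * r) - w ^ (1 + j * r))) [:- (w ^ (1 + j * r)), 1:])"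

definition Iset :: "nat \<Rightarrow> nat \<Rightarrow> 'a::field \<Rightarrow> 'a \<Rightarrow> 'a \<Rightarrow> nat \<Rightarrow> 'a poly poly set \<Rightarrow> nat \<Rightarrow> 'a poly set" where
  "Iset s l a b w r C j = {f. degree f < s \<and> red s l a b (ypoly (eta w r l j) * xpoly f) \<in> C}"

end

theory Submission imports Defs begin

definition ev :: "'a::field poly \<Rightarrow> 'a \<Rightarrow> 'a poly poly \<Rightarrow> 'a poly" where
  "ev M t F = poly F [:t:] mod M"

lemma ev_add: "ev M t (F + G) = ev M t F + ev M t G"
  by (simp add: ev_def poly_add poly_mod_add_left)

lemma ev_diff: "ev M t (F - G) = ev M t F - ev M t G"
  by (simp add: ev_def poly_diff poly_mod_diff_left)

lemma ev_0[simp]: "ev M t 0 = 0"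
  by (simp add: ev_def)

lemma ev_mult: "ev M t (F * G) = (ev M t F * ev M t G) mod M"
  by (simp add: ev_def mod_mult_eq)

lemma ev_smult: "ev M t (smult [:c:] F) = smult c (ev M t F)"
  by (simp add: ev_def mod_smult_left)

lemma ev_sum: "ev M t (\<Sum>i\<in>A. F i) = (\<Sum>i\<in>A. ev M t (F i))"
  by (induction A rule: infinite_finite_induct) (auto simp: ev_add)

lemma ev_xpoly: "ev M t (xpoly f) = f mod M"
  by (simp add: ev_def xpoly_def)

lemma poly_ypoly: "poly (ypoly e) [:t:] = [:poly e t:]"
  unfolding ypoly_def
  by (induction e) (auto simp: map_poly_pCons algebra_simps)

lemma ev_ypoly: "ev M t (ypoly e) = [:poly e t:] mod M"
  by (simp add: ev_def poly_ypoly)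

lemma coeff_poly_const: "coeff (poly G [:t:]) m = poly (map_poly (\<lambda>c. coeff c m) G) t"
  by (induction G) (auto simp: map_poly_pCons algebra_simps)

lemma const_pow: "[:t:] ^ n = [:(t::'a::comm_semiring_1) ^ n:]"
  by (induction n) (auto simp: mult.commute)

lemma ev_red:
  assumes "t ^ l = b" "0 < l"
  shows "ev (xmod s a) t (red s l a b F) = ev (xmod s a) t F"
proof -
  let ?M = "xmod s a"
  have "ev ?M t (red s l a b F) =
     (\<Sum>k\<le>degree F. (smult (b ^ (k div l)) (coeff F k) mod ?M) * [:t:] ^ (k mod l)) mod ?M"
    by (simp add: ev_def red_def poly_sum poly_monom)
  also have "\<dots> = (\<Sum>k\<le>degree F. ((smult (b ^ (k div l)) (coeff F k) mod ?M) * [:t:] ^ (k mod l)) mod ?M) mod ?M"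
    by (simp add: mod_sum_eq)
  also have "\<dots> = (\<Sum>k\<le>degree F. (smult (b ^ (k div l)) (coeff F k) * [:t:] ^ (k mod l)) mod ?M) mod ?M"
    by (simp add: mod_mult_left_eq)
  also have "\<dots> = (\<Sum>k\<le>degree F. (smult (b ^ (k div l)) (coeff F k) * [:t:] ^ (k mod l))) mod ?M"
    by (simp add: mod_sum_eq)
  also have "(\<Sum>k\<le>degree F. (smult (b ^ (k div l)) (coeff F k) * [:t:] ^ (k mod l)))
       = (\<Sum>k\<le>degree F. coeff F k * [:t:] ^ k)"
  proof (rule sum.cong[OF refl])
    fix k
    have "t ^ k = b ^ (k div l) * t ^ (k mod l)"
      using assms by (metis div_mult_mod_eq power_add power_mult mult.commute)
    then show "smult (b ^ (k div l)) (coeff F k) * [:t:] ^ (k mod l) = coeff F k * [:t:] ^ k"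
      by (simp add: const_pow mult.commute mult.left_commute)
  qed
  finally show ?thesis by (simp add: ev_def poly_altdef)
qed


lemma deg_map_le: "f 0 = 0 \<Longrightarrow> degree (map_poly f p) \<le> degree p"
  by (rule degree_le) (auto simp: coeff_map_poly coeff_eq_0)

lemma Rset_0: "0 < l \<Longrightarrow> 0 < s \<Longrightarrow> 0 \<in> Rset s l"
  by (simp add: Rset_def)

lemma Rset_add: "F \<in> Rset s l \<Longrightarrow> G \<in> Rset s l \<Longrightarrow> F + G \<in> Rset s l"
  unfolding Rset_def
  by (auto intro: le_less_trans[OF degree_add_le_max])

lemma Rset_diff: "F \<in> Rset s l \<Longrightarrow> G \<in> Rset s l \<Longrightarrow> F - G \<in> Rset s l"
  unfolding Rset_def
  by (auto intro: le_less_trans[OF degree_diff_le_max])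

lemma Rset_smult: "F \<in> Rset s l \<Longrightarrow> smult [:c:] F \<in> Rset s l"
  unfolding Rset_def
  by (auto intro: le_less_trans[OF degree_smult_le] le_less_trans[OF degree_mult_le])

lemma Rset_sum: "0 < l \<Longrightarrow> 0 < s \<Longrightarrow> (\<And>i. i \<in> A \<Longrightarrow> F i \<in> Rset s l) \<Longrightarrow> (\<Sum>i\<in>A. F i) \<in> Rset s l"
  by (induction A rule: infinite_finite_induct) (auto simp: Rset_0 Rset_add)

lemma Rset_monom: "n < l \<Longrightarrow> degree c < s \<Longrightarrow> monom c n \<in> Rset s l"
  unfolding Rset_def
  by (auto simp: coeff_monom intro: le_less_trans[OF degree_monom_le])

lemma degree_xmod: "0 < s \<Longrightarrow> degree (xmod s a) = s"
proof -
  assume "0 < s"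
  have "monom 1 s - [:a:] = monom 1 s + (- [:a:])" by simp
  also have "degree \<dots> = s" using \<open>0 < s\<close>
    by (subst degree_add_eq_left) (auto simp: degree_monom_eq)
  finally show ?thesis unfolding xmod_def .
qed

lemma xmod_nz: "0 < s \<Longrightarrow> xmod s a \<noteq> 0"
  using degree_xmod[of s a] by auto

lemma degree_mod_xmod: "0 < s \<Longrightarrow> degree (c mod xmod s a) < s"
  using degree_mod_less[OF xmod_nz[of s a], of c] degree_xmod[of s a] by auto

lemma Rset_red: "0 < l \<Longrightarrow> 0 < s \<Longrightarrow> red s l a b F \<in> Rset s l"
  unfolding red_def
  by (intro Rset_sum Rset_monom) (auto simp: degree_mod_xmod)

lemma ev_Rset:
  assumes "G \<in> Rset s l" "0 < s"
  shows "ev (xmod s a) t G = poly G [:t:]"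
proof -
  have "map_poly (\<lambda>c. coeff c m) G = 0" if "m \<ge> s" for m
    using assms that unfolding Rset_def
  proof (intro poly_eqI)
    fix n
    have "degree (coeff G n) < m" using assms(1) that unfolding Rset_def by (auto intro: order.strict_trans2)
    then show "coeff (map_poly (\<lambda>c. coeff c m) G) n = coeff 0 n"
      by (simp add: coeff_map_poly coeff_eq_0)
  qed
  hence "\<forall>m>s-1. coeff (poly G [:t:]) m = 0"
    using assms by (auto simp: coeff_poly_const)
  hence "degree (poly G [:t:]) \<le> s - 1" by (rule degree_le)
  hence "degree (poly G [:t:]) < s" using assms by linarith
  thus ?thesis unfolding ev_def by (simp add: mod_poly_less degree_xmod assms)
qed

lemma Rset_inj:
  assumes "G \<in> Rset s l" "0 < s" "inj_on th {..<l}"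
    and "\<And>k. k < l \<Longrightarrow> ev (xmod s a) (th k) G = 0"
  shows "G = 0"
proof -
  have "coeff (coeff G k) m = 0" for k m
  proof -
    let ?Q = "map_poly (\<lambda>c. coeff c m) G"
    have dQ: "degree ?Q < l" using assms(1) unfolding Rset_def
      by (auto intro: le_less_trans[OF deg_map_le])
    have "?Q = 0"
    proof (rule poly_eqI_degree[where A = "th ` {..<l}"])
      fix x assume "x \<in> th ` {..<l}"
      then obtain k where "k < l" "x = th k" by auto
      then show "poly ?Q x = poly 0 x"
        using assms(4)[OF \<open>k < l\<close>] ev_Rset[OF assms(1,2)] coeff_poly_const[of G x m]
        by (metis coeff_0 poly_0)
    next
      show "degree ?Q < card (th ` {..<l})" using dQ card_image[OF assms(3)] by simp
      show "degree 0 < card (th ` {..<l})" using dQ card_image[OF assms(3)] by simp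
    qed
    then show ?thesis
      by (metis coeff_0 coeff_map_poly)
  qed
  then show ?thesis by (metis leading_coeff_0_iff)
qed


lemma mult_order_pos:
  fixes b :: "'a::{finite,field}"
  assumes "b \<noteq> 0"
  shows "0 < mult_order b"
proof -
  have "\<not> inj (\<lambda>n::nat. b ^ n)"
  proof
    assume "inj (\<lambda>n::nat. b ^ n)"
    hence "infinite (range (\<lambda>n::nat. b ^ n))" by (rule range_inj_infinite)
    moreover have "finite (range (\<lambda>n::nat. b ^ n))" by simp
    ultimately show False by simp
  qed
  then obtain i j :: nat where ij: "i \<noteq> j" "b ^ i = b ^ j" unfolding inj_def by blast
  have "\<exists>n. 0 < n \<and> b ^ n = 1" if "i < j" "b ^ i = b ^ j" for i j :: nat
  proof -
    have "b ^ j = b ^ i * b ^ (j - i)" using \<open>i < j\<close> by (simp add: power_add[symmetric])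
    hence "b ^ (j - i) = 1" using that assms by simp
    thus ?thesis using that by (intro exI[of _ "j - i"]) auto
  qed
  then have "\<exists>n. 0 < n \<and> b ^ n = 1" using ij by (metis linorder_neqE_nat)
  then show ?thesis unfolding mult_order_def by (metis (mono_tags, lifting) LeastI_ex)
qed

lemma theta_inj:
  fixes w :: "'a::field"
  assumes "0 < r" "0 < l" "primitive_root_of_unity (r * l) w"
  shows "inj_on (\<lambda>j. w ^ (1 + j * r)) {..<l}"
proof -
  have w1: "w ^ (r * l) = 1" and prim: "\<And>k. 0 < k \<Longrightarrow> k < r * l \<Longrightarrow> w ^ k \<noteq> 1"
    using assms(3) unfolding primitive_root_of_unity_def by auto
  have w0: "w \<noteq> 0"
  proof
    assume "w = 0"
    have z: "(0::'a) ^ (r * l) = 0" by (rule zero_power) (use assms in simp)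
    have "w ^ (r * l) = 0" by (subst \<open>w = 0\<close>) (rule z)
    thus False using w1 by simp
  qed
  have *: False if ij: "i < j" "j < l" and eq: "w ^ (1 + i * r) = w ^ (1 + j * r)" for i j
  proof -
    obtain d where d: "j = i + d" "0 < d" using less_imp_add_positive[OF ij(1)] by blast
    have e: "1 + j * r = (1 + i * r) + d * r" using d(1) by (simp add: algebra_simps)
    have "w ^ (1 + j * r) = w ^ (1 + i * r) * w ^ (d * r)" unfolding e by (rule power_add)
    hence "w ^ (d * r) = 1" using eq w0 by simp
    moreover have "0 < d * r" using d assms by simp
    moreover have "d * r < r * l" using d ij assms by (simp add: mult.commute)
    ultimately show False using prim by blast
  qed
  show ?thesis
  proof (rule inj_onI)
    fix x y assume "x \<in> {..<l}" "y \<in> {..<l}" "w ^ (1 + x * r) = w ^ (1 + y * r)"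
    then show "x = y" using *[of x y] *[of y x] by (cases x y rule: linorder_cases) auto
  qed
qed

lemma theta_pow:
  fixes w :: "'a::field"
  assumes "primitive_root_of_unity (r * l) w" "w ^ l = b"
  shows "(w ^ (1 + j * r)) ^ l = b"
proof -
  have "(w ^ (1 + j * r)) ^ l = w ^ l * (w ^ (r * l)) ^ j"
    by (simp add: power_mult[symmetric] power_add[symmetric] algebra_simps)
  then show ?thesis using assms unfolding primitive_root_of_unity_def by simp
qed

lemma lag_one: "(A::'a::field) \<noteq> B \<Longrightarrow> poly (smult (1/(A-B)) [:-B,1:]) A = 1"
proof -
  assume "A \<noteq> B"
  hence nz: "A - B \<noteq> 0" by simp
  have "poly (smult c [:-B,1:]) A = c * (A - B)" for c by (simp add: algebra_simps)
  hence "poly (smult (1/(A-B)) [:-B,1:]) A = 1/(A-B) * (A - B)" .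
  also have "\<dots> = 1" using nz by simp
  finally show ?thesis .
qed

lemma lin_deg: "degree (smult c [:-a, 1:]) \<le> 1"
  by (rule order.trans[OF degree_smult_le]) simp

lemma eta_val:
  fixes w :: "'a::field"
  assumes "inj_on (\<lambda>j. w ^ (1 + j * r)) {..<l}" "k < l" "j < l"
  shows "poly (eta w r l k) (w ^ (1 + j * r)) = (if j = k then 1 else 0)"
proof (cases "j = k")
  case True
  have "poly (eta w r l k) (w ^ (1 + j * r)) = (\<Prod>i\<in>{0..<l} - {k}. 1)"
    unfolding eta_def poly_prod
  proof (rule prod.cong[OF refl])
    fix i assume "i \<in> {0..<l} - {k}"
    hence "w ^ (1 + k * r) \<noteq> w ^ (1 + i * r)"
      using assms(1,2) unfolding inj_on_def by (metis Diff_iff atLeastLessThan_iff lessThan_iff singletonI)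
    thus "poly (smult (1 / (w ^ (1 + k * r) - w ^ (1 + i * r))) [:- (w ^ (1 + i * r)), 1:]) (w ^ (1 + j * r)) = 1"
      using True lag_one by blast
  qed
  then show ?thesis using True by simp
next
  case False
  have "j \<in> {0..<l} - {k}" using False assms by auto
  then show ?thesis unfolding eta_def poly_prod if_not_P[OF False]
    by (intro prod_zero bexI[of _ j]) auto
qed

lemma eta_degree:
  assumes "k < l"
  shows "degree (eta w r l k) < l"
proof -
  have "degree (eta w r l k) \<le> (\<Sum>i\<in>{0..<l} - {k}. 1)"
    unfolding eta_def
    apply (rule order.trans[OF degree_prod_sum_le])
     apply simp
    apply (rule sum_mono)
    apply (simp only: o_def lin_deg)
    done
  also have "\<dots> = l - 1" using assms by simp
  finally show ?thesis using assms by linarith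
qed

lemma ypoly_Rset:
  assumes "degree e < l" "0 < s"
  shows "ypoly e \<in> Rset s l"
  unfolding Rset_def ypoly_def using assms
  by (auto intro: le_less_trans[OF deg_map_le] simp: coeff_map_poly)


lemma monom_sum_eq: "(\<forall>i\<ge>n. coeff h i = 0) \<Longrightarrow> (\<Sum>i<n. monom (coeff h i) i) = h"
  by (intro poly_eqI) (auto simp: coeff_sum coeff_monom)

lemma coeff_monom_sum: "i < n \<Longrightarrow> coeff (\<Sum>i'<n. monom (c i') i') i = c i"
  by (simp add: coeff_sum coeff_monom)

lemma mod_xmod_small: "0 < s \<Longrightarrow> degree X < s \<Longrightarrow> X mod xmod s a = X"
  by (simp add: mod_poly_less degree_xmod)

lemma const_mod: "0 < s \<Longrightarrow> [:c:] mod xmod s a = [:c:]"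
  by (simp add: mod_xmod_small)

theorem theorem2:
  fixes \<alpha> \<beta> \<omega> :: "'a::{finite,field}"
    and s l r :: nat
    and C :: "'a poly poly set"
    and p :: "nat \<Rightarrow> 'a poly"
  assumes "0 < s" and "0 < l"
    and "\<alpha> \<noteq> 0" and "\<beta> \<noteq> 0"
    and "r = mult_order \<beta>"
    and "CARD('a) mod (r * l) = 1 mod (r * l)"
    and "primitive_root_of_unity (r * l) \<omega>" and "\<omega> ^ l = \<beta>"
    and "is_R_ideal s l \<alpha> \<beta> C"
    and "\<forall>j<l. lead_coeff (p j) = 1 \<and> p j dvd xmod s \<alpha> \<and>
           Iset s l \<alpha> \<beta> \<omega> r C j = {(g * p j) mod xmod s \<alpha> | g. True}"
  shows "let b = (\<lambda>(j, i). red s l \<alpha> \<beta> (xpoly (monom 1 i * p j) * ypoly (eta \<omega> r l j)));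
             Idx = {(j, i). j < l \<and> i < s - degree (p j)}
         in (\<forall>ji\<in>Idx. b ji \<in> C)
          \<and> (\<forall>c :: nat \<times> nat \<Rightarrow> 'a. (\<Sum>ji\<in>Idx. smult [:c ji:] (b ji)) = 0 \<longrightarrow> (\<forall>ji\<in>Idx. c ji = 0))
          \<and> (\<forall>f\<in>C. \<exists>c :: nat \<times> nat \<Rightarrow> 'a. f = (\<Sum>ji\<in>Idx. smult [:c ji:] (b ji)))"
proof -
  note s0 = assms(1) and l0 = assms(2)
  define M where "M = xmod s \<alpha>"
  define th where "th = (\<lambda>j::nat. \<omega> ^ (1 + j * r))"
  define b where "b = (\<lambda>(j, i). red s l \<alpha> \<beta> (xpoly (monom 1 i * p j) * ypoly (eta \<omega> r l j)))"
  define Idx where "Idx = {(j, i). j < l \<and> i < s - degree (p j)}"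
  have CR: "C \<subseteq> Rset s l" and Cadd: "\<And>f g. f \<in> C \<Longrightarrow> g \<in> C \<Longrightarrow> f + g \<in> C"
    and Cmul: "\<And>g f. g \<in> Rset s l \<Longrightarrow> f \<in> C \<Longrightarrow> red s l \<alpha> \<beta> (g * f) \<in> C"
    using assms(9) unfolding is_R_ideal_def by auto
  have pj: "\<And>j. j < l \<Longrightarrow> lead_coeff (p j) = 1 \<and> p j dvd M \<and>
           Iset s l \<alpha> \<beta> \<omega> r C j = {(g * p j) mod M | g. True}"
    using assms(10) unfolding M_def by auto
  have pnz: "\<And>j. j < l \<Longrightarrow> p j \<noteq> 0" using pj by fastforce
  have r0: "0 < r" using mult_order_pos[OF assms(4)] assms(5) by simp
  have inj: "inj_on th {..<l}" unfolding th_def by (rule theta_inj[OF r0 l0 assms(7)])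
  have etav: "\<And>j k. j < l \<Longrightarrow> k < l \<Longrightarrow> poly (eta \<omega> r l k) (th j) = (if j = k then 1 else 0)"
    unfolding th_def by (rule eta_val[OF inj[unfolded th_def]])
  have evred: "\<And>k F. ev M (th k) (red s l \<alpha> \<beta> F) = ev M (th k) F"
    unfolding M_def th_def by (rule ev_red[OF theta_pow[OF assms(7,8)] l0])
  have yR: "\<And>j. j < l \<Longrightarrow> ypoly (eta \<omega> r l j) \<in> Rset s l"
    by (rule ypoly_Rset[OF eta_degree s0])
  have evy: "\<And>j k. j < l \<Longrightarrow> k < l \<Longrightarrow> ev M (th k) (ypoly (eta \<omega> r l j)) = (if j = k then 1 else 0)"
    using etav const_mod[OF s0] unfolding M_def ev_ypoly by (auto simp: one_pCons)
  have xlt: "\<And>j i. j < l \<Longrightarrow> i < s - degree (p j) \<Longrightarrow> degree (monom 1 i * p j) < s"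
    using pnz by (subst degree_mult_eq) (auto simp: degree_monom_eq)
  have evb: "\<And>j i k. j < l \<Longrightarrow> i < s - degree (p j) \<Longrightarrow> k < l \<Longrightarrow>
      ev M (th k) (b (j, i)) = (if j = k then monom 1 i * p j else 0)"
  proof -
    fix j i k assume a: "j < l" "i < s - degree (p j)" "k < l"
    have X: "(monom 1 i * p j) mod M = monom 1 i * p j"
      unfolding M_def by (rule mod_xmod_small[OF s0 xlt[OF a(1,2)]])
    show "ev M (th k) (b (j, i)) = (if j = k then monom 1 i * p j else 0)"
      using X by (cases "j = k") (simp_all add: b_def evred ev_mult ev_xpoly evy a)
  qed
  have Idx_eq: "Idx = Sigma {..<l} (\<lambda>j. {..<s - degree (p j)})"
    unfolding Idx_def by auto
  have evS: "ev M (th k) (\<Sum>ji\<in>Idx. smult [:c ji:] (b ji)) =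
      (\<Sum>i<s - degree (p k). monom (c (k, i)) i) * p k" if "k < l" for c k
  proof -
    have "ev M (th k) (\<Sum>ji\<in>Idx. smult [:c ji:] (b ji)) =
        (\<Sum>j<l. \<Sum>i<s - degree (p j). smult (c (j, i)) (ev M (th k) (b (j, i))))"
      unfolding ev_sum ev_smult Idx_eq by (simp add: sum.Sigma)
    also have "\<dots> = (\<Sum>j<l. if j = k then (\<Sum>i<s - degree (p j). smult (c (j, i)) (monom 1 i * p j)) else 0)"
      by (rule sum.cong[OF refl]) (auto simp: evb that)
    also have "\<dots> = (\<Sum>i<s - degree (p k). smult (c (k, i)) (monom 1 i * p k))"
      using that by simp
    also have "\<dots> = (\<Sum>i<s - degree (p k). monom (c (k, i)) i) * p k"
      by (simp add: smult_monom_mult sum_distrib_right)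
    finally show ?thesis .
  qed
  have bC: "\<forall>ji\<in>Idx. b ji \<in> C"
  proof
    fix ji assume "ji \<in> Idx"
    then obtain j i where ji: "ji = (j, i)" "j < l" "i < s - degree (p j)" unfolding Idx_def by auto
    let ?X = "monom 1 i * p j"
    have "?X = (monom 1 i * p j) mod M"
      unfolding M_def using mod_xmod_small[OF s0 xlt[OF ji(2,3)]] by simp
    hence "?X \<in> Iset s l \<alpha> \<beta> \<omega> r C j" using pj[OF ji(2)] by blast
    hence "red s l \<alpha> \<beta> (ypoly (eta \<omega> r l j) * xpoly ?X) \<in> C" unfolding Iset_def by simp
    thus "b ji \<in> C" unfolding b_def ji(1) by (simp add: mult.commute)
  qed
  have indep: "\<forall>ji\<in>Idx. c ji = 0" if "(\<Sum>ji\<in>Idx. smult [:c ji:] (b ji)) = 0" for c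
  proof
    fix ji assume "ji \<in> Idx"
    then obtain j i where ji: "ji = (j, i)" "j < l" "i < s - degree (p j)" unfolding Idx_def by auto
    have "(\<Sum>i<s - degree (p j). monom (c (j, i)) i) * p j = 0"
      using evS[OF ji(2), of c] that by simp
    hence "(\<Sum>i<s - degree (p j). monom (c (j, i)) i) = 0" using pnz[OF ji(2)] by simp
    hence "coeff (\<Sum>i'<s - degree (p j). monom (c (j, i')) i') i = 0" by simp
    thus "c ji = 0" using coeff_monom_sum[OF ji(3), of "\<lambda>i'. c (j, i')"] ji(1) by simp
  qed
  have span: "\<exists>c. f = (\<Sum>ji\<in>Idx. smult [:c ji:] (b ji))" if fC: "f \<in> C" for f
  proof -
    have fR: "f \<in> Rset s l" using fC CR by auto
    have "\<exists>h. ev M (th j) f = h * p j \<and> (\<forall>i\<ge>s - degree (p j). coeff h i = 0)" if jl: "j < l" for j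
    proof -
      define g where "g = ev M (th j) f"
      have gmod: "g mod M = g" unfolding g_def ev_def by simp
      have dg: "degree g < s" unfolding g_def ev_def M_def by (rule degree_mod_xmod[OF s0])
      have eq: "red s l \<alpha> \<beta> (ypoly (eta \<omega> r l j) * xpoly g) = red s l \<alpha> \<beta> (ypoly (eta \<omega> r l j) * f)"
      proof -
        have "red s l \<alpha> \<beta> (ypoly (eta \<omega> r l j) * xpoly g) - red s l \<alpha> \<beta> (ypoly (eta \<omega> r l j) * f) = 0"
        proof (rule Rset_inj[OF Rset_diff[OF Rset_red[OF l0 s0] Rset_red[OF l0 s0]] s0 inj])
          fix k assume "k < l"
          show "ev (xmod s \<alpha>) (th k) (red s l \<alpha> \<beta> (ypoly (eta \<omega> r l j) * xpoly g) - red s l \<alpha> \<beta> (ypoly (eta \<omega> r l j) * f)) = 0"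
            using evy[OF jl \<open>k < l\<close>] gmod
            unfolding M_def[symmetric] ev_diff evred ev_mult ev_xpoly
            by (auto simp: g_def ev_def)
        qed
        thus ?thesis by simp
      qed
      have "red s l \<alpha> \<beta> (ypoly (eta \<omega> r l j) * f) \<in> C" by (rule Cmul[OF yR[OF jl] fC])
      hence "g \<in> Iset s l \<alpha> \<beta> \<omega> r C j" unfolding Iset_def using dg eq by simp
      then obtain h where gh: "g = (h * p j) mod M" using pj[OF jl] by blast
      define Q where "Q = M div p j"
      have MQ: "M = Q * p j" unfolding Q_def using pj[OF jl] by simp
      have Mnz: "M \<noteq> 0" unfolding M_def by (rule xmod_nz[OF s0])
      have Qnz: "Q \<noteq> 0" using MQ Mnz by auto
      have dQ: "degree Q = s - degree (p j)"
        using degree_mult_eq[OF Qnz pnz[OF jl]] MQ degree_xmod[OF s0, of \<alpha>] unfolding M_def by simp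
      have g2: "g = (h mod Q) * p j" using gh MQ by (simp add: mod_mult_mult2)
      have "\<forall>i\<ge>s - degree (p j). coeff (h mod Q) i = 0"
        using degree_mod_less[OF Qnz, of h] dQ by (auto intro: coeff_eq_0)
      thus ?thesis using g2 unfolding g_def by blast
    qed
    hence "\<forall>j. \<exists>h. j < l \<longrightarrow> ev M (th j) f = h * p j \<and> (\<forall>i\<ge>s - degree (p j). coeff h i = 0)"
      by blast
    from choice[OF this] obtain H where H0: "\<forall>j. j < l \<longrightarrow> ev M (th j) f = H j * p j \<and> (\<forall>i\<ge>s - degree (p j). coeff (H j) i = 0)"
      by blast
    have H: "\<And>j. j < l \<Longrightarrow> ev M (th j) f = H j * p j \<and> (\<forall>i\<ge>s - degree (p j). coeff (H j) i = 0)"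
      using H0 by blast
    define c where "c = (\<lambda>(j, i). coeff (H j) i)"
    have SR: "(\<Sum>ji\<in>Idx. smult [:c ji:] (b ji)) \<in> Rset s l"
      using bC CR by (intro Rset_sum[OF l0 s0] Rset_smult) auto
    have "f - (\<Sum>ji\<in>Idx. smult [:c ji:] (b ji)) = 0"
    proof (rule Rset_inj[OF Rset_diff[OF fR SR] s0 inj])
      fix k assume k: "k < l"
      show "ev (xmod s \<alpha>) (th k) (f - (\<Sum>ji\<in>Idx. smult [:c ji:] (b ji))) = 0"
        unfolding M_def[symmetric] ev_diff evS[OF k] using H[OF k] monom_sum_eq[of "s - degree (p k)" "H k"]
        by (simp add: c_def)
    qed
    thus ?thesis by auto
  qed
  show ?thesis unfolding Let_def b_def[symmetric] Idx_def[symmetric] using bC indep span by blast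
qed

end
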